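(* Let $n\ge2$ be even and $L\ge1$ an integer. Let $\rho_{\text{in}}=U(\boldsymbol\beta)(|0\rangle\langle0|)^{\otimes n}U(\boldsymbol\beta)^\dagger$, where $U(\boldsymbol\beta)=V_{2L+1}U_LU_{L-1}\cdots U_1X^{\otimes n}$ is the $L$-layer encoding circuit described in the context. Then $$\mathbb{E}_{\boldsymbol\beta}\,\alpha(\rho_{\text{in}})\ge 2^{-2L},$$ where $\alpha(\rho)=\text{Tr}[(\sigma_1\otimes I^{\otimes(n-1)})\rho]^2+\text{Tr}[(\sigma_3\otimes I^{\otimes(n-1)})\rho]^2$ and the expectation is over all parameters $\beta_j^{(k)}$ drawn independently and uniformly from $[0,2\pi]$.
   Context: Pauli matrices $\sigma_0=I,\sigma_1=X,\sigma_2=Y,\sigma_3=Z$. Qubits are numbered $1,\dots,n$. For $j=1,\dots,2L+1$, $V_j=W_j^{(1)}\otimes\cdots\otimes W_j^{(n)}$ with $W_j^{(k)}=e^{-i\beta_j^{(k)}\sigma_2}$ acting on qubit $k$. $CZ$ on qubits $(a,b)$ is $|0\rangle\langle0|_a\otimes I_b+|1\rangle\langle1|_a\otimes(\sigma_3)_b$. $CZ_1$ is the product of $CZ$ gates on the pairs $(1,2),(3,4),\dots,(n-1,n)$; $CZ_2$ is the product of $CZ$ gates on the pairs $(2,3),(4,5),\dots,(n-2,n-1)$ and $(n,1)$. The $j$-th alternating layer is $U_j=CZ_1V_{2j}CZ_2V_{2j-1}$. *)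

theory Defs
  imports "HOL-Probability.Probability" "Jordan_Normal_Form.Matrix"
begin

text \<open>Basis index i in {0..<2^n};
  qubit k (1 \<le> k \<le> n) corresponds to the k-th tensor factor, i.e. bit (n-k) of i
  (qubit 1 is the most significant / leftmost factor).\<close>

definition qbit :: "nat \<Rightarrow> nat \<Rightarrow> nat \<Rightarrow> nat" where
  "qbit n k i = (i div 2 ^ (n - k)) mod 2"

definition tensor_op :: "nat \<Rightarrow> (nat \<Rightarrow> complex mat) \<Rightarrow> complex mat" where
  "tensor_op n G = mat (2 ^ n) (2 ^ n)
     (\<lambda>(i, j). \<Prod>k\<in>{1..n}. G k $$ (qbit n k i, qbit n k j))"

definition dagger :: "complex mat \<Rightarrow> complex mat" where
  "dagger A = mat (dim_col A) (dim_row A) (\<lambda>(i, j). cnj (A $$ (j, i)))"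

definition mtrace :: "complex mat \<Rightarrow> complex" where
  "mtrace A = (\<Sum>i<dim_row A. A $$ (i, i))"

definition sigma :: "nat \<Rightarrow> complex mat" where
  "sigma a = (if a = 1 then mat_of_rows_list 2 [[0, 1], [1, 0]]
         else if a = 2 then mat_of_rows_list 2 [[0, -\<i>], [\<i>, 0]]
         else if a = 3 then mat_of_rows_list 2 [[1, 0], [0, -1]]
         else 1\<^sub>m 2)"

definition proj0 :: "complex mat" where "proj0 = mat_of_rows_list 2 [[1, 0], [0, 0]]"
definition proj1 :: "complex mat" where "proj1 = mat_of_rows_list 2 [[0, 0], [0, 1]]"

text \<open>W(beta) = exp(-i beta sigma_2) = cos beta I - i sin beta sigma_2 (since sigma_2^2 = I).\<close>
definition Wgate :: "real \<Rightarrow> complex mat" where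
  "Wgate b = complex_of_real (cos b) \<cdot>\<^sub>m 1\<^sub>m 2 - (\<i> * complex_of_real (sin b)) \<cdot>\<^sub>m sigma 2"

definition CZ :: "nat \<Rightarrow> nat \<Rightarrow> nat \<Rightarrow> complex mat" where
  "CZ n a b = tensor_op n (\<lambda>k. if k = a then proj0 else 1\<^sub>m 2)
            + tensor_op n (\<lambda>k. if k = a then proj1 else if k = b then sigma 3 else 1\<^sub>m 2)"

definition CZ1 :: "nat \<Rightarrow> complex mat" where
  "CZ1 n = foldr (\<lambda>m A. CZ n (2 * m - 1) (2 * m) * A) [1..<n div 2 + 1] (1\<^sub>m (2 ^ n))"

text \<open>Pairs (2,3),(4,5),...,(n-2,n-1) and (n,1).\<close>
definition CZ2 :: "nat \<Rightarrow> complex mat" where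
  "CZ2 n = foldr (\<lambda>m A. CZ n (2 * m) (2 * m + 1) * A) [1..<n div 2] (CZ n n 1)"

text \<open>V_j = W_j^(1) \<otimes> ... \<otimes> W_j^(n), with beta j k = beta_j^(k).\<close>
definition Vlayer :: "nat \<Rightarrow> (nat \<Rightarrow> nat \<Rightarrow> real) \<Rightarrow> nat \<Rightarrow> complex mat" where
  "Vlayer n \<beta> j = tensor_op n (\<lambda>k. Wgate (\<beta> j k))"

definition Ulayer :: "nat \<Rightarrow> (nat \<Rightarrow> nat \<Rightarrow> real) \<Rightarrow> nat \<Rightarrow> complex mat" where
  "Ulayer n \<beta> j = CZ1 n * Vlayer n \<beta> (2 * j) * CZ2 n * Vlayer n \<beta> (2 * j - 1)"

fun layers :: "nat \<Rightarrow> (nat \<Rightarrow> nat \<Rightarrow> real) \<Rightarrow> nat \<Rightarrow> complex mat" where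
  "layers n \<beta> 0 = 1\<^sub>m (2 ^ n)"
| "layers n \<beta> (Suc l) = Ulayer n \<beta> (Suc l) * layers n \<beta> l"

definition Ucirc :: "nat \<Rightarrow> nat \<Rightarrow> (nat \<Rightarrow> nat \<Rightarrow> real) \<Rightarrow> complex mat" where
  "Ucirc n L \<beta> = Vlayer n \<beta> (2 * L + 1) * layers n \<beta> L * tensor_op n (\<lambda>_. sigma 1)"

definition rho_in :: "nat \<Rightarrow> nat \<Rightarrow> (nat \<Rightarrow> nat \<Rightarrow> real) \<Rightarrow> complex mat" where
  "rho_in n L \<beta> = Ucirc n L \<beta> * tensor_op n (\<lambda>_. proj0) * dagger (Ucirc n L \<beta>)"

text \<open>alpha(rho) = Tr[(sigma_1 \<otimes> I)rho]^2 + Tr[(sigma_3 \<otimes> I)rho]^2; the traces are real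
  for Hermitian rho, so we take real parts.\<close>
definition alpha :: "nat \<Rightarrow> complex mat \<Rightarrow> real" where
  "alpha n \<rho> = (Re (mtrace (tensor_op n (\<lambda>k. if k = 1 then sigma 1 else 1\<^sub>m 2) * \<rho>)))\<^sup>2
             + (Re (mtrace (tensor_op n (\<lambda>k. if k = 1 then sigma 3 else 1\<^sub>m 2) * \<rho>)))\<^sup>2"

definition beta_measure :: "nat \<Rightarrow> nat \<Rightarrow> ((nat \<times> nat) \<Rightarrow> real) measure" where
  "beta_measure n L = PiM ({1..2 * L + 1} \<times> {1..n}) (\<lambda>_. uniform_measure lborel {0..2 * pi})"

end

theory Submission
  imports Defs
begin
lemma mult_entry:
  assumes "A \<in> carrier_mat nr k" "B \<in> carrier_mat k nc" "i < nr" "j < nc"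
  shows "(A * B) $$ (i,j) = (\<Sum>m<k. A $$ (i,m) * B $$ (m,j))"
  using assms by (auto simp: scalar_prod_def lessThan_atLeast0 intro!: sum.cong)

definition m2 :: "complex \<Rightarrow> complex \<Rightarrow> complex \<Rightarrow> complex \<Rightarrow> complex mat" where
  "m2 a b c d = mat 2 2 (\<lambda>(i,j). if i = 0 then (if j = 0 then a else b) else (if j = 0 then c else d))"

lemma m2_carrier[simp]: "m2 a b c d \<in> carrier_mat 2 2" "dim_row (m2 a b c d) = 2" "dim_col (m2 a b c d) = 2"
  by (auto simp: m2_def)

lemma m2_idx[simp]: "m2 a b c d $$ (0,0) = a" "m2 a b c d $$ (0,1) = b"
  "m2 a b c d $$ (1,0) = c" "m2 a b c d $$ (1,1) = d"
  "m2 a b c d $$ (0,Suc 0) = b"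
  "m2 a b c d $$ (Suc 0,0) = c" "m2 a b c d $$ (Suc 0,Suc 0) = d"
  by (auto simp: m2_def)

lemma less2S: "(i::nat) < Suc (Suc 0) \<longleftrightarrow> i = 0 \<or> i = Suc 0" by auto

lemma less2: "(i::nat) < 2 \<longleftrightarrow> i = 0 \<or> i = 1" by auto

lemma m2_ext: assumes "A \<in> carrier_mat 2 2"
  shows "A = m2 (A $$ (0,0)) (A $$ (0,1)) (A $$ (1,0)) (A $$ (1,1))"
  using assms by (intro eq_matI) (auto simp: less2 less2S)

lemma m2_mult[simp]: "m2 a b c d * m2 e f g h = m2 (a*e+b*g) (a*f+b*h) (c*e+d*g) (c*f+d*h)"
proof (intro eq_matI)
  fix i j assume "i < dim_row (m2 (a*e+b*g) (a*f+b*h) (c*e+d*g) (c*f+d*h))"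
    "j < dim_col (m2 (a*e+b*g) (a*f+b*h) (c*e+d*g) (c*f+d*h))"
  then have "i < 2" "j < 2" by auto
  then show "(m2 a b c d * m2 e f g h) $$ (i, j) = m2 (a*e+b*g) (a*f+b*h) (c*e+d*g) (c*f+d*h) $$ (i, j)"
    by (subst mult_entry[of _ 2 2 _ 2]) (auto simp: less2S numeral_2_eq_2)
qed auto

lemma m2_dagger[simp]: "dagger (m2 a b c d) = m2 (cnj a) (cnj c) (cnj b) (cnj d)"
  by (intro eq_matI) (auto simp: dagger_def less2)

lemma m2_eq_iff: "m2 a b c d = m2 a' b' c' d' \<longleftrightarrow> a = a' \<and> b = b' \<and> c = c' \<and> d = d'"
  by (metis m2_idx)

lemma sigma1_m2: "sigma 1 = m2 0 1 1 0"
  by (intro eq_matI) (auto simp: sigma_def mat_of_rows_list_def less2)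
lemma sigma2_m2: "sigma 2 = m2 0 (-\<i>) \<i> 0"
  by (intro eq_matI) (auto simp: sigma_def mat_of_rows_list_def less2)
lemma sigma3_m2: "sigma 3 = m2 1 0 0 (-1)"
  by (intro eq_matI) (auto simp: sigma_def mat_of_rows_list_def less2)
lemma one2_m2: "1\<^sub>m 2 = m2 1 0 0 1"
  by (intro eq_matI) (auto simp: less2)
lemma proj0_m2: "proj0 = m2 1 0 0 0"
  by (intro eq_matI) (auto simp: proj0_def mat_of_rows_list_def less2)
lemma proj1_m2: "proj1 = m2 0 0 0 1"
  by (intro eq_matI) (auto simp: proj1_def mat_of_rows_list_def less2)

lemma ii_mult: "\<i> * x * \<i> = - (x::complex)"
proof -
  have "\<i> * x * \<i> = (\<i> * \<i>) * x" by (simp add: ac_simps)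
  then show ?thesis by simp
qed

lemma Wgate_m2: "Wgate b = m2 (cos b) (- sin b) (sin b) (cos b)"
  by (intro eq_matI) (auto simp: Wgate_def sigma2_m2 less2 m2_def ii_mult)

lemma qbit_less[simp]: "qbit n k i < 2" "qbit n k i < Suc (Suc 0)" by (simp_all add: qbit_def)

lemma qbit_last: "qbit (Suc n) (Suc n) i = i mod 2" by (simp add: qbit_def)

lemma qbit_Suc: assumes "k \<le> n" shows "qbit (Suc n) k i = qbit n k (i div 2)"
proof -
  have "Suc n - k = Suc (n - k)" using assms by simp
  then show ?thesis by (simp add: qbit_def div_mult2_eq)
qed

lemma sum_split2: "(\<Sum>i<2*N. g i) = (\<Sum>i<N. g (2*i) + g (2*i+1))" for g :: "nat \<Rightarrow> 'a::comm_monoid_add"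
  by (induction N) (auto simp: ac_simps)

lemma sum_prod_bits:
  fixes f :: "nat \<Rightarrow> nat \<Rightarrow> 'a::comm_semiring_1"
  shows "(\<Sum>i<2^n. \<Prod>k\<in>{1..n}. f k (qbit n k i)) = (\<Prod>k\<in>{1..n}. f k 0 + f k 1)"
proof (induction n arbitrary: f)
  case 0
  then show ?case by simp
next
  case (Suc n)
  have e: "(\<Prod>k\<in>{1..Suc n}. f k (qbit (Suc n) k (2*i + r))) = (\<Prod>k\<in>{1..n}. f k (qbit n k i)) * f (Suc n) r"
    if "r < 2" for i r
  proof -
    have "(\<Prod>k\<in>{1..Suc n}. f k (qbit (Suc n) k (2*i + r))) =
      (\<Prod>k\<in>{1..n}. f k (qbit (Suc n) k (2*i + r))) * f (Suc n) (qbit (Suc n) (Suc n) (2*i+r))"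
      by (simp add: prod.cl_ivl_Suc)
    also have "(\<Prod>k\<in>{1..n}. f k (qbit (Suc n) k (2*i + r))) = (\<Prod>k\<in>{1..n}. f k (qbit n k i))"
      using that by (intro prod.cong) (auto simp: qbit_Suc)
    also have "qbit (Suc n) (Suc n) (2*i+r) = r" using that by (simp add: qbit_last)
    finally show ?thesis .
  qed
  have "(\<Sum>i<2^Suc n. \<Prod>k\<in>{1..Suc n}. f k (qbit (Suc n) k i)) =
     (\<Sum>i<2^n. (\<Prod>k\<in>{1..Suc n}. f k (qbit (Suc n) k (2*i))) + (\<Prod>k\<in>{1..Suc n}. f k (qbit (Suc n) k (2*i+1))))"
    by (simp add: sum_split2)
  also have "\<dots> = (\<Sum>i<2^n. (\<Prod>k\<in>{1..n}. f k (qbit n k i)) * (f (Suc n) 0 + f (Suc n) 1))"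
    using e[of 0] e[of 1] by (simp add: distrib_left)
  also have "\<dots> = (\<Prod>k\<in>{1..n}. f k 0 + f k 1) * (f (Suc n) 0 + f (Suc n) 1)"
    by (metis (no_types) Suc.IH sum_distrib_right)
  also have "\<dots> = (\<Prod>k\<in>{1..Suc n}. f k 0 + f k 1)" by (simp add: prod.cl_ivl_Suc)
  finally show ?case .
qed

lemma qbit_inj:
  assumes "i < 2^n" "j < 2^n" "\<forall>k\<in>{1..n}. qbit n k i = qbit n k j"
  shows "i = j"
  using assms
proof (induction n arbitrary: i j)
  case 0
  then show ?case by simp
next
  case (Suc n)
  have m: "i mod 2 = j mod 2" using Suc.prems(3)[rule_format, of "Suc n"] by (simp add: qbit_last)
  have "i div 2 = j div 2"
  proof (rule Suc.IH)
    show "i div 2 < 2^n" "j div 2 < 2^n" using Suc.prems by auto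
    show "\<forall>k\<in>{1..n}. qbit n k (i div 2) = qbit n k (j div 2)"
      using Suc.prems(3) by (auto simp: qbit_Suc[symmetric])
  qed
  then show ?case using m by (metis div_mult_mod_eq)
qed

lemma tensor_carrier[simp]: "tensor_op n G \<in> carrier_mat (2^n) (2^n)"
  "dim_row (tensor_op n G) = 2^n" "dim_col (tensor_op n G) = 2^n"
  by (auto simp: tensor_op_def)

lemma tensor_idx: "i < 2^n \<Longrightarrow> j < 2^n \<Longrightarrow> tensor_op n G $$ (i,j) = (\<Prod>k\<in>{1..n}. G k $$ (qbit n k i, qbit n k j))"
  by (simp add: tensor_op_def)

lemma tensor_mult:
  assumes "\<And>k. k \<in> {1..n} \<Longrightarrow> G k \<in> carrier_mat 2 2 \<and> H k \<in> carrier_mat 2 2"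
  shows "tensor_op n G * tensor_op n H = tensor_op n (\<lambda>k. G k * H k)"
proof (intro eq_matI)
  fix i j assume "i < dim_row (tensor_op n (\<lambda>k. G k * H k))" "j < dim_col (tensor_op n (\<lambda>k. G k * H k))"
  then have ij: "i < 2^n" "j < 2^n" by auto
  have "(tensor_op n G * tensor_op n H) $$ (i,j) = (\<Sum>m<2^n. tensor_op n G $$ (i,m) * tensor_op n H $$ (m,j))"
    using ij by (intro mult_entry) auto
  also have "\<dots> = (\<Sum>m<2^n. \<Prod>k\<in>{1..n}. G k $$ (qbit n k i, qbit n k m) * H k $$ (qbit n k m, qbit n k j))"
    using ij by (intro sum.cong) (auto simp: tensor_idx prod.distrib)
  also have "\<dots> = (\<Prod>k\<in>{1..n}. G k $$ (qbit n k i, 0) * H k $$ (0, qbit n k j) + G k $$ (qbit n k i, 1) * H k $$ (1, qbit n k j))"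
    by (rule sum_prod_bits[where f = "\<lambda>k b. G k $$ (qbit n k i, b) * H k $$ (b, qbit n k j)"])
  also have "\<dots> = (\<Prod>k\<in>{1..n}. (G k * H k) $$ (qbit n k i, qbit n k j))"
  proof (intro prod.cong refl)
    fix k assume k: "k \<in> {1..n}"
    show "G k $$ (qbit n k i, 0) * H k $$ (0, qbit n k j) + G k $$ (qbit n k i, 1) * H k $$ (1, qbit n k j)
       = (G k * H k) $$ (qbit n k i, qbit n k j)"
      using assms[OF k] by (subst mult_entry[of _ 2 2 _ 2]) (auto simp: numeral_2_eq_2)
  qed
  also have "\<dots> = tensor_op n (\<lambda>k. G k * H k) $$ (i,j)" using ij by (simp add: tensor_idx)
  finally show "(tensor_op n G * tensor_op n H) $$ (i,j) = tensor_op n (\<lambda>k. G k * H k) $$ (i,j)" .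
qed auto

lemma tensor_dagger:
  assumes "\<And>k. k \<in> {1..n} \<Longrightarrow> G k \<in> carrier_mat 2 2"
  shows "dagger (tensor_op n G) = tensor_op n (\<lambda>k. dagger (G k))"
proof (intro eq_matI)
  fix i j assume "i < dim_row (tensor_op n (\<lambda>k. dagger (G k)))" "j < dim_col (tensor_op n (\<lambda>k. dagger (G k)))"
  then have ij: "i < 2^n" "j < 2^n" by auto
  show "dagger (tensor_op n G) $$ (i,j) = tensor_op n (\<lambda>k. dagger (G k)) $$ (i,j)"
  proof -
    have "dagger (G k) $$ (qbit n k i, qbit n k j) = cnj (G k $$ (qbit n k j, qbit n k i))" if "k \<in> {1..n}" for k
      using assms[OF that] by (auto simp: dagger_def)
    then show ?thesis using ij by (auto simp: tensor_idx dagger_def intro!: prod.cong)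
  qed
qed (auto simp: dagger_def)

lemma tensor_trace:
  shows "mtrace (tensor_op n G) = (\<Prod>k\<in>{1..n}. G k $$ (0,0) + G k $$ (1,1))"
proof -
  have "mtrace (tensor_op n G) = (\<Sum>i<2^n. \<Prod>k\<in>{1..n}. (\<lambda>k b. G k $$ (b,b)) k (qbit n k i))"
    by (simp add: mtrace_def tensor_idx)
  also have "\<dots> = (\<Prod>k\<in>{1..n}. G k $$ (0,0) + G k $$ (1,1))" by (rule sum_prod_bits)
  finally show ?thesis .
qed

lemma dagger_carrier[simp]: "A \<in> carrier_mat r c \<Longrightarrow> dagger A \<in> carrier_mat c r"
  by (auto simp: dagger_def)

lemma dagger_dims[simp]: "dim_row (dagger A) = dim_col A" "dim_col (dagger A) = dim_row A"
  by (auto simp: dagger_def)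

lemma dagger_idx: "i < dim_col A \<Longrightarrow> j < dim_row A \<Longrightarrow> dagger A $$ (i,j) = cnj (A $$ (j,i))"
  by (auto simp: dagger_def)

lemma dagger_mult:
  assumes "A \<in> carrier_mat r k" "B \<in> carrier_mat k c"
  shows "dagger (A * B) = dagger B * dagger A"
proof (intro eq_matI)
  fix i j assume "i < dim_row (dagger B * dagger A)" "j < dim_col (dagger B * dagger A)"
  then have ij: "i < c" "j < r" using assms by auto
  have "dagger (A * B) $$ (i,j) = cnj ((A*B) $$ (j,i))" using ij assms by (simp add: dagger_idx)
  also have "\<dots> = (\<Sum>m<k. cnj (A $$ (j,m)) * cnj (B $$ (m,i)))"
    using ij assms by (simp del: index_mult_mat(1) add: mult_entry[of _ r k _ c])
  also have "\<dots> = (\<Sum>m<k. dagger B $$ (i,m) * dagger A $$ (m,j))"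
    using ij assms by (intro sum.cong) (auto simp: dagger_idx)
  also have "\<dots> = (dagger B * dagger A) $$ (i,j)"
    using ij assms by (simp del: index_mult_mat(1) add: mult_entry[of _ c k _ r])
  finally show "dagger (A * B) $$ (i,j) = (dagger B * dagger A) $$ (i,j)" .
qed (use assms in auto)

lemma trace_comm:
  assumes "A \<in> carrier_mat N K" "B \<in> carrier_mat K N"
  shows "mtrace (A * B) = mtrace (B * A)"
proof -
  have "mtrace (A * B) = (\<Sum>i<N. \<Sum>m<K. A $$ (i,m) * B $$ (m,i))"
    using assms by (auto simp del: index_mult_mat(1) simp: mtrace_def mult_entry[of _ N K _ N] intro!: sum.cong)
  also have "\<dots> = (\<Sum>m<K. \<Sum>i<N. B $$ (m,i) * A $$ (i,m))"
    by (subst sum.swap) (simp add: mult.commute)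
  also have "\<dots> = mtrace (B * A)"
    using assms by (auto simp del: index_mult_mat(1) simp: mtrace_def mult_entry[of _ K N _ K] intro!: sum.cong)
  finally show ?thesis .
qed

definition cj :: "complex mat \<Rightarrow> complex mat \<Rightarrow> complex mat" where
  "cj A S = A * S * dagger A"

lemma cj_carrier[simp]: "A \<in> carrier_mat N N \<Longrightarrow> S \<in> carrier_mat N N \<Longrightarrow> cj A S \<in> carrier_mat N N"
  by (auto simp: cj_def)

lemma cj_mult:
  assumes "A \<in> carrier_mat N N" "B \<in> carrier_mat N N" "S \<in> carrier_mat N N"
  shows "cj (A * B) S = cj A (cj B S)"
  using assms by (simp add: cj_def dagger_mult[of _ N N _ N] assoc_mult_mat[of _ N N _ N _ N] mult_carrier_mat[of _ N N _ N])

lemma trace_cj: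
  assumes "P \<in> carrier_mat N N" "A \<in> carrier_mat N N" "S \<in> carrier_mat N N"
  shows "mtrace (P * cj A S) = mtrace ((dagger A * P * A) * S)"
proof -
  have "P * cj A S = ((P * A) * S) * dagger A"
    using assms by (simp add: cj_def assoc_mult_mat[of _ N N _ N _ N])
  then have "mtrace (P * cj A S) = mtrace (dagger A * ((P * A) * S))"
    using assms by (simp add: trace_comm[of _ N N])
  also have "dagger A * ((P * A) * S) = (dagger A * P * A) * S"
    using assms by (simp add: assoc_mult_mat[of _ N N _ N _ N])
  finally show ?thesis .
qed

lemma trace_lin:
  assumes "A \<in> carrier_mat N N" "B \<in> carrier_mat N N" "C \<in> carrier_mat N N" "S \<in> carrier_mat N N"
    "\<And>i j. i < N \<Longrightarrow> j < N \<Longrightarrow> A $$ (i,j) = c * B $$ (i,j) + d * C $$ (i,j)"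
  shows "mtrace (A * S) = c * mtrace (B * S) + d * mtrace (C * S)"
proof -
  have "mtrace (A * S) = (\<Sum>i<N. \<Sum>m<N. c * (B $$ (i,m) * S $$ (m,i)) + d * (C $$ (i,m) * S $$ (m,i)))"
    using assms by (auto simp del: index_mult_mat(1) simp: mtrace_def mult_entry[of _ N N _ N] distrib_right mult.assoc intro!: sum.cong)
  also have "\<dots> = c * (\<Sum>i<N. \<Sum>m<N. B $$ (i,m) * S $$ (m,i)) + d * (\<Sum>i<N. \<Sum>m<N. C $$ (i,m) * S $$ (m,i))"
    by (simp only: sum.distrib sum_distrib_left)
  also have "\<dots> = c * mtrace (B * S) + d * mtrace (C * S)"
    using assms by (auto simp del: index_mult_mat(1) simp: mtrace_def mult_entry[of _ N N _ N] intro!: sum.cong)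
  finally show ?thesis .
qed

definition pmdiag :: "nat \<Rightarrow> complex mat \<Rightarrow> bool" where
  "pmdiag N D \<longleftrightarrow> (\<exists>s. (\<forall>i. s i = 1 \<or> s i = -1) \<and> D = mat N N (\<lambda>(i,j). if i = j then s i else 0))"

lemma pmdiag_carrier: "pmdiag N D \<Longrightarrow> D \<in> carrier_mat N N"
  by (auto simp: pmdiag_def)

lemma diag_mult:
  "mat N N (\<lambda>(i,j). if i = j then s i else 0) * mat N N (\<lambda>(i,j). if i = j then t i else 0)
   = (mat N N (\<lambda>(i,j). if i = j then s i * t i else 0) :: complex mat)"
proof (intro eq_matI)
  fix i j assume "i < dim_row (mat N N (\<lambda>(i,j). if i = j then s i * t i else 0) :: complex mat)"
     "j < dim_col (mat N N (\<lambda>(i,j). if i = j then s i * t i else 0) :: complex mat)"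
  then have ij: "i < N" "j < N" by auto
  have "(mat N N (\<lambda>(i,j). if i = j then s i else 0) * mat N N (\<lambda>(i,j). if i = j then t i else 0)) $$ (i,j)
     = (\<Sum>m<N. (if i = m then s i else 0) * (if m = j then t m else 0))"
    using ij by (subst index_mult_mat(1) mult_entry[of _ N N _ N]) auto
  also have "\<dots> = (\<Sum>m<N. if m = i then (if i = j then s i * t i else 0) else 0)"
    by (intro sum.cong) auto
  also have "\<dots> = (if i = j then s i * t i else 0)" using ij by (simp add: sum.delta)
  finally show "(mat N N (\<lambda>(i,j). if i = j then s i else 0) * mat N N (\<lambda>(i,j). if i = j then t i else 0)) $$ (i,j)
     = (mat N N (\<lambda>(i,j). if i = j then s i * t i else 0) :: complex mat) $$ (i,j)" using ij by simp
qed auto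

lemma pmdiag_mult: assumes "pmdiag N A" "pmdiag N B" shows "pmdiag N (A * B)"
proof -
  obtain s where s: "\<forall>i. s i = 1 \<or> s i = -1" "A = mat N N (\<lambda>(i,j). if i = j then s i else 0)"
    using assms(1) by (auto simp: pmdiag_def)
  obtain t where t: "\<forall>i. t i = 1 \<or> t i = -1" "B = mat N N (\<lambda>(i,j). if i = j then t i else 0)"
    using assms(2) by (auto simp: pmdiag_def)
  have "\<forall>i. s i * t i = 1 \<or> s i * t i = -1"
  proof
    fix i
    have "s i = 1 \<or> s i = -1" "t i = 1 \<or> t i = -1" using s(1) t(1) by auto
    then show "s i * t i = 1 \<or> s i * t i = -1" by auto
  qed
  then show ?thesis unfolding pmdiag_def s(2) t(2) diag_mult by (intro exI[of _ "\<lambda>i. s i * t i"]) simp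
qed

lemma pmdiag_comm: assumes "pmdiag N A" "pmdiag N B" shows "A * B = B * A"
proof -
  obtain s where s: "A = mat N N (\<lambda>(i,j). if i = j then s i else 0)"
    using assms(1) by (auto simp: pmdiag_def)
  obtain t where t: "B = mat N N (\<lambda>(i,j). if i = j then t i else 0)"
    using assms(2) by (auto simp: pmdiag_def)
  have "(\<lambda>i. s i * t i) = (\<lambda>i. t i * s i)" by (simp add: mult.commute)
  then show ?thesis unfolding s t diag_mult by (intro eq_matI) (auto simp: mult.commute)
qed

lemma pmdiag_unit: assumes "pmdiag N D" shows "dagger D * D = 1\<^sub>m N"
proof -
  obtain s where s: "\<forall>i. s i = 1 \<or> s i = -1" "D = mat N N (\<lambda>(i,j). if i = j then s i else 0)"
    using assms(1) by (auto simp: pmdiag_def)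
  have c: "cnj (s i) = s i" "s i * s i = 1" for i using s(1)[rule_format, of i] by auto
  have dd: "dagger D = D" unfolding s(2)
    by (intro eq_matI) (auto simp: dagger_def c)
  have "dagger D * D = mat N N (\<lambda>(i,j). if i = j then s i * s i else 0)" unfolding dd unfolding s(2) diag_mult ..
  also have "\<dots> = 1\<^sub>m N" by (intro eq_matI) (auto simp: c)
  finally show ?thesis .
qed

lemma pmdiag_one: "pmdiag N (1\<^sub>m N)"
  unfolding pmdiag_def by (rule exI[of _ "\<lambda>_. 1"]) (auto intro!: eq_matI)

lemma tensor_cong: "(\<And>k. k \<in> {1..n} \<Longrightarrow> G k = H k) \<Longrightarrow> tensor_op n G = tensor_op n H"
  unfolding tensor_op_def by (intro eq_matI) (auto intro!: prod.cong)

lemma tensor_diag: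
  "tensor_op n (\<lambda>k. m2 (g k 0) 0 0 (g k 1)) = mat (2^n) (2^n) (\<lambda>(i,j). if i = j then \<Prod>k\<in>{1..n}. g k (qbit n k i) else 0)"
proof (intro eq_matI)
  fix i j assume "i < dim_row (mat (2^n) (2^n) (\<lambda>(i,j). if i = j then \<Prod>k\<in>{1..n}. g k (qbit n k i) else 0))"
    "j < dim_col (mat (2^n) (2^n) (\<lambda>(i,j). if i = j then \<Prod>k\<in>{1..n}. g k (qbit n k i) else 0))"
  then have ij: "i < 2^n" "j < 2^n" by auto
  have e: "m2 (g k 0) 0 0 (g k 1) $$ (qbit n k i, qbit n k j) = (if qbit n k i = qbit n k j then g k (qbit n k i) else 0)" for k
    using qbit_less(1)[of n k i] qbit_less(1)[of n k j] by (auto simp: less2)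
  show "tensor_op n (\<lambda>k. m2 (g k 0) 0 0 (g k 1)) $$ (i,j) = mat (2^n) (2^n) (\<lambda>(i,j). if i = j then \<Prod>k\<in>{1..n}. g k (qbit n k i) else 0) $$ (i,j)"
  proof (cases "i = j")
    case True
    then show ?thesis using ij by (unfold tensor_idx[OF ij] e) simp
  next
    case False
    then obtain k where k: "k \<in> {1..n}" "qbit n k i \<noteq> qbit n k j" using qbit_inj[OF ij] by blast
    have "(\<Prod>k\<in>{1..n}. m2 (g k 0) 0 0 (g k 1) $$ (qbit n k i, qbit n k j)) = 0"
        apply (rule prod_zero)
       apply simp
      apply (rule bexI[of _ k])
      using k by (simp only: e, simp) (rule k(1))
    then show ?thesis using ij False by (simp add: tensor_idx)
  qed
qed auto

definition Zop :: "nat \<Rightarrow> complex mat" where "Zop n = tensor_op n (\<lambda>k. if k = 1 then sigma 3 else 1\<^sub>m 2)"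
definition Xop :: "nat \<Rightarrow> complex mat" where "Xop n = tensor_op n (\<lambda>k. if k = 1 then sigma 1 else 1\<^sub>m 2)"

lemma Zop_carrier[simp]: "Zop n \<in> carrier_mat (2^n) (2^n)" by (simp add: Zop_def)
lemma Xop_carrier[simp]: "Xop n \<in> carrier_mat (2^n) (2^n)" by (simp add: Xop_def)

lemma prod_pm1:
  assumes "finite S" "\<And>k. k \<in> S \<Longrightarrow> f k = 1 \<or> f k = (-1::complex)"
  shows "prod f S = 1 \<or> prod f S = -1"
  using assms
proof (induction S rule: finite_induct)
  case empty then show ?case by simp
next
  case (insert x F)
  have a: "f x = 1 \<or> f x = -1" using insert.prems by auto
  have b: "prod f F = 1 \<or> prod f F = -1" using insert.IH insert.prems by auto
  show ?case using a b insert.hyps by auto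
qed

lemma pmdiag_tensor:
  fixes g :: "nat \<Rightarrow> nat \<Rightarrow> complex"
  assumes "\<And>k x. k \<in> {1..n} \<Longrightarrow> x < 2 \<Longrightarrow> g k x = 1 \<or> g k x = -1"
  shows "pmdiag (2^n) (tensor_op n (\<lambda>k. m2 (g k 0) 0 0 (g k 1)))"
proof -
  have "\<forall>i. (\<Prod>k\<in>{1..n}. g k (qbit n k i)) = 1 \<or> (\<Prod>k\<in>{1..n}. g k (qbit n k i)) = -1"
    using assms by (intro allI prod_pm1) auto
  then show ?thesis unfolding tensor_diag pmdiag_def by (intro exI[of _ "\<lambda>i. \<Prod>k\<in>{1..n}. g k (qbit n k i)"]) simp
qed

lemma Zop_pmdiag: "pmdiag (2^n) (Zop n)"
proof -
  define g where "g k x = (if k = 1 \<and> x = 1 then -1 else (1::complex))" for k x :: nat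
  have "(\<lambda>k. if k = 1 then sigma 3 else 1\<^sub>m 2) = (\<lambda>k. m2 (g k 0) 0 0 (g k 1))"
    by (auto simp: g_def sigma3_m2 one2_m2)
  moreover have "pmdiag (2^n) (tensor_op n (\<lambda>k. m2 (g k 0) 0 0 (g k 1)))"
    by (rule pmdiag_tensor) (auto simp: g_def)
  ultimately show ?thesis by (simp add: Zop_def)
qed

lemma diag_add:
  "mat N N (\<lambda>(i,j). if i = j then s i else 0) + mat N N (\<lambda>(i,j). if i = j then t i else 0)
   = (mat N N (\<lambda>(i,j). if i = j then s i + t i else 0) :: complex mat)"
  by (intro eq_matI) auto

lemma CZ_pmdiag:
  assumes "a \<in> {1..n}" "b \<in> {1..n}" "a \<noteq> b"
  shows "pmdiag (2^n) (CZ n a b)"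
proof -
  define g1 where "g1 k x = (if k = a then (if x = 1 then 0 else 1) else (1::complex))" for k x :: nat
  define g2 where "g2 k x = (if k = a then (if x = 0 then 0 else 1) else if k = b then (if x = 1 then -1 else 1) else (1::complex))" for k x :: nat
  have e1: "(\<lambda>k. if k = a then proj0 else 1\<^sub>m 2) = (\<lambda>k. m2 (g1 k 0) 0 0 (g1 k 1))"
    by (auto simp: g1_def proj0_m2 one2_m2)
  have e2: "(\<lambda>k. if k = a then proj1 else if k = b then sigma 3 else 1\<^sub>m 2) = (\<lambda>k. m2 (g2 k 0) 0 0 (g2 k 1))"
    using assms(3) by (auto simp: g2_def proj1_m2 one2_m2 sigma3_m2)
  have p1: "(\<Prod>k\<in>{1..n}. g1 k x) = (if x = 1 then 0 else 1)" if "x < 2" for x :: nat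
  proof -
    have "(\<Prod>k\<in>{1..n}. g1 k x) = (\<Prod>k\<in>{1..n}. if k = a then (if x = 1 then 0 else 1) else 1)"
      by (simp add: g1_def)
    then show ?thesis using assms(1) by simp
  qed
  have p1': "(\<Prod>k\<in>{1..n}. g1 k (qbit n k i)) = (if qbit n a i = 1 then 0 else 1)" for i
  proof -
    have "(\<Prod>k\<in>{1..n}. g1 k (qbit n k i)) = (\<Prod>k\<in>{1..n}. if k = a then (if qbit n a i = 1 then 0 else 1) else 1)"
      by (intro prod.cong) (auto simp: g1_def)
    then show ?thesis using assms(1) by simp
  qed
  have p2': "(\<Prod>k\<in>{1..n}. g2 k (qbit n k i)) = (if qbit n a i = 0 then 0 else 1) * (if qbit n b i = 1 then -1 else 1)" for i
  proof -
    have "(\<Prod>k\<in>{1..n}. g2 k (qbit n k i)) = (\<Prod>k\<in>{1..n}. (if k = a then (if qbit n a i = 0 then 0 else 1) else 1) * (if k = b then (if qbit n b i = 1 then -1 else 1) else 1))"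
      using assms(3) by (intro prod.cong) (auto simp: g2_def)
    also have "\<dots> = (\<Prod>k\<in>{1..n}. (if k = a then (if qbit n a i = 0 then 0 else 1) else 1)) * (\<Prod>k\<in>{1..n}. (if k = b then (if qbit n b i = 1 then -1 else 1) else 1))"
      by (rule prod.distrib)
    finally show ?thesis using assms(1,2) by simp
  qed
  have "CZ n a b = mat (2^n) (2^n) (\<lambda>(i,j). if i = j then (\<Prod>k\<in>{1..n}. g1 k (qbit n k i)) + (\<Prod>k\<in>{1..n}. g2 k (qbit n k i)) else 0)"
    unfolding CZ_def e1 e2 tensor_diag diag_add ..
  moreover have "\<forall>i. (\<Prod>k\<in>{1..n}. g1 k (qbit n k i)) + (\<Prod>k\<in>{1..n}. g2 k (qbit n k i)) = 1 \<or>
     (\<Prod>k\<in>{1..n}. g1 k (qbit n k i)) + (\<Prod>k\<in>{1..n}. g2 k (qbit n k i)) = -1"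
  proof
    fix i
    have "qbit n a i = 0 \<or> qbit n a i = 1" "qbit n b i = 0 \<or> qbit n b i = 1"
      using qbit_less(1)[of n a i] qbit_less(1)[of n b i] by linarith+
    then show "(\<Prod>k\<in>{1..n}. g1 k (qbit n k i)) + (\<Prod>k\<in>{1..n}. g2 k (qbit n k i)) = 1 \<or>
     (\<Prod>k\<in>{1..n}. g1 k (qbit n k i)) + (\<Prod>k\<in>{1..n}. g2 k (qbit n k i)) = -1"
      unfolding p1' p2' by auto
  qed
  ultimately show ?thesis unfolding pmdiag_def
    by (intro exI[of _ "\<lambda>i. (\<Prod>k\<in>{1..n}. g1 k (qbit n k i)) + (\<Prod>k\<in>{1..n}. g2 k (qbit n k i))"] conjI)
qed

lemma pmdiag_foldr:
  assumes "pmdiag N B" "\<And>m. m \<in> set xs \<Longrightarrow> pmdiag N (f m)"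
  shows "pmdiag N (foldr (\<lambda>m A. f m * A) xs B)"
  using assms by (induction xs) (auto intro: pmdiag_mult)

lemma CZ1_pmdiag: assumes "n \<ge> 2" shows "pmdiag (2^n) (CZ1 n)"
  unfolding CZ1_def
proof (rule pmdiag_foldr[OF pmdiag_one])
  fix m assume "m \<in> set [1..<n div 2 + 1]"
  then have "1 \<le> m" "m \<le> n div 2" by auto
  then show "pmdiag (2^n) (CZ n (2 * m - 1) (2 * m))" by (intro CZ_pmdiag) auto
qed

lemma CZ2_pmdiag: assumes "n \<ge> 2" shows "pmdiag (2^n) (CZ2 n)"
  unfolding CZ2_def
proof (rule pmdiag_foldr)
  show "pmdiag (2^n) (CZ n n 1)" using assms by (intro CZ_pmdiag) auto
  fix m assume "m \<in> set [1..<n div 2]"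
  then have "1 \<le> m" "m < n div 2" by auto
  then show "pmdiag (2^n) (CZ n (2 * m) (2 * m + 1))" by (intro CZ_pmdiag) auto
qed

lemma trace_cj_diag:
  assumes "pmdiag (2^n) D" "S \<in> carrier_mat (2^n) (2^n)"
  shows "mtrace (Zop n * cj D S) = mtrace (Zop n * S)"
proof -
  have Dc: "D \<in> carrier_mat (2^n) (2^n)" using assms(1) by (rule pmdiag_carrier)
  have "dagger D * Zop n * D = dagger D * (Zop n * D)"
    using Dc by (simp add: assoc_mult_mat[of _ "2^n" "2^n" _ "2^n" _ "2^n"])
  also have "Zop n * D = D * Zop n" using Zop_pmdiag assms(1) by (rule pmdiag_comm)
  also have "dagger D * (D * Zop n) = (dagger D * D) * Zop n"
    using Dc by (simp add: assoc_mult_mat[of _ "2^n" "2^n" _ "2^n" _ "2^n"])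
  also have "\<dots> = Zop n" using pmdiag_unit[OF assms(1)] left_mult_one_mat[OF Zop_carrier] by simp
  finally show ?thesis using trace_cj[OF Zop_carrier Dc assms(2)] by simp
qed

lemma cos_b2: "cos ((b::real)*2) = cos b * cos b - sin b * sin b" 
proof -
  have "cos (b*2) = cos (2*b)" by (simp add: mult.commute)
  then show ?thesis by (simp add: cos_double power2_eq_square)
qed
lemma sin_b2: "sin ((b::real)*2) = 2 * sin b * cos b"
proof -
  have "sin (b*2) = sin (2*b)" by (simp add: mult.commute)
  then show ?thesis by (simp add: sin_double)
qed
lemma sc1: "sin (b::real) * sin b + cos b * cos b = 1" using sin_cos_squared_add3[of b] by (simp add: add.commute)

lemma cs_one: "complex_of_real (cos (b::real)) * complex_of_real (cos b) + complex_of_real (sin b) * complex_of_real (sin b) = 1"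
  by (simp only: of_real_mult[symmetric] of_real_add[symmetric] sin_cos_squared_add3 of_real_1)

lemma cos2c: "complex_of_real (cos (2*(b::real))) = complex_of_real (cos b) * complex_of_real (cos b) - complex_of_real (sin b) * complex_of_real (sin b)"
  by (simp add: cos_double power2_eq_square)
lemma sin2c: "complex_of_real (sin (2*(b::real))) = 2 * complex_of_real (sin b) * complex_of_real (cos b)"
  by (simp add: sin_double)

lemma W_unit: "dagger (Wgate b) * Wgate b = 1\<^sub>m 2"
  unfolding Wgate_m2 one2_m2 m2_dagger m2_mult m2_eq_iff
  by (simp flip: of_real_mult of_real_add of_real_diff of_real_minus add: sc1)

lemma W_Z: "dagger (Wgate b) * sigma 3 * Wgate b =
   m2 (cos (2*b)) (- sin (2*b)) (- sin (2*b)) (- cos (2*b))"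
  unfolding Wgate_m2 sigma3_m2 m2_dagger m2_mult m2_eq_iff
  by (simp flip: of_real_mult of_real_add of_real_diff of_real_minus add: cos_b2 sin_b2 algebra_simps)

lemma W_X: "dagger (Wgate b) * sigma 1 * Wgate b =
   m2 (sin (2*b)) (cos (2*b)) (cos (2*b)) (- sin (2*b))"
  unfolding Wgate_m2 sigma1_m2 m2_dagger m2_mult m2_eq_iff
  by (simp flip: of_real_mult of_real_add of_real_diff of_real_minus add: cos_b2 sin_b2 algebra_simps)

lemma tensor_split1:
  assumes "n \<ge> 1" "i < 2^n" "j < 2^n"
    and "\<And>a b. a < 2 \<Longrightarrow> b < 2 \<Longrightarrow> C $$ (a,b) = c * A $$ (a,b) + d * B $$ (a,b)"
  shows "tensor_op n (\<lambda>k. if k = 1 then C else G k) $$ (i,j) =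
     c * tensor_op n (\<lambda>k. if k = 1 then A else G k) $$ (i,j) + d * tensor_op n (\<lambda>k. if k = 1 then B else G k) $$ (i,j)"
proof -
  have one: "1 \<in> {1..n}" using assms(1) by simp
  define R where "R = (\<Prod>k\<in>{1..n} - {1}. G k $$ (qbit n k i, qbit n k j))"
  have gen: "(\<Prod>k\<in>{1..n}. (if k = 1 then M else G k) $$ (qbit n k i, qbit n k j)) = M $$ (qbit n 1 i, qbit n 1 j) * R" for M
  proof -
    have "(\<Prod>k\<in>{1..n}. (if k = 1 then M else G k) $$ (qbit n k i, qbit n k j)) =
       (if (1::nat) = 1 then M else G 1) $$ (qbit n 1 i, qbit n 1 j) * (\<Prod>k\<in>{1..n} - {1}. (if k = 1 then M else G k) $$ (qbit n k i, qbit n k j))"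
      by (rule prod.remove) (use one in simp_all)
    also have "(\<Prod>k\<in>{1..n} - {1}. (if k = 1 then M else G k) $$ (qbit n k i, qbit n k j)) = R"
      unfolding R_def by (intro prod.cong) auto
    finally show ?thesis by simp
  qed
  show ?thesis
    unfolding tensor_idx[OF assms(2,3)] gen assms(4)[OF qbit_less(1) qbit_less(1)] by (simp add: algebra_simps)
qed

lemma Vlayer_carrier[simp]: "Vlayer n \<beta> j \<in> carrier_mat (2^n) (2^n)"
  by (simp add: Vlayer_def)

lemma Wgate_carrier[simp]: "Wgate b \<in> carrier_mat 2 2" by (simp add: Wgate_m2)

lemma sigma_Suc0: "sigma (Suc 0) = m2 0 1 1 0" using sigma1_m2 by simp

lemma sigma_carrier[simp]: "sigma a \<in> carrier_mat 2 2"
  unfolding sigma_def mat_of_rows_list_def carrier_mat_def by simp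

lemma V_conj:
  fixes P :: "complex mat"
  assumes "P \<in> carrier_mat 2 2"
  shows "dagger (Vlayer n \<beta> j) * tensor_op n (\<lambda>k. if k = 1 then P else 1\<^sub>m 2) * Vlayer n \<beta> j
     = tensor_op n (\<lambda>k. if k = 1 then dagger (Wgate (\<beta> j 1)) * P * Wgate (\<beta> j 1) else 1\<^sub>m 2)"
proof -
  have "dagger (Vlayer n \<beta> j) * tensor_op n (\<lambda>k. if k = 1 then P else 1\<^sub>m 2) * Vlayer n \<beta> j
    = tensor_op n (\<lambda>k. dagger (Wgate (\<beta> j k)) * (if k = 1 then P else 1\<^sub>m 2) * Wgate (\<beta> j k))"
  proof -
    have c1: "\<And>k. k \<in> {1..n} \<Longrightarrow> dagger (Wgate (\<beta> j k)) \<in> carrier_mat 2 2 \<and> (if k = 1 then P else 1\<^sub>m 2) \<in> carrier_mat 2 2"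
      using assms by auto
    have c2: "\<And>k. k \<in> {1..n} \<Longrightarrow> dagger (Wgate (\<beta> j k)) * (if k = 1 then P else 1\<^sub>m 2) \<in> carrier_mat 2 2 \<and> Wgate (\<beta> j k) \<in> carrier_mat 2 2"
      using assms by (auto intro!: mult_carrier_mat[of _ 2 2 _ 2])
    show ?thesis unfolding Vlayer_def
      by (simp only: tensor_dagger[of n "\<lambda>k. Wgate (\<beta> j k)", OF Wgate_carrier] tensor_mult[OF c1] tensor_mult[OF c2])
  qed
  also have "\<dots> = tensor_op n (\<lambda>k. if k = 1 then dagger (Wgate (\<beta> j 1)) * P * Wgate (\<beta> j 1) else 1\<^sub>m 2)"
  proof (intro tensor_cong)
    fix k
    show "dagger (Wgate (\<beta> j k)) * (if k = 1 then P else 1\<^sub>m 2) * Wgate (\<beta> j k) =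
          (if k = 1 then dagger (Wgate (\<beta> j 1)) * P * Wgate (\<beta> j 1) else 1\<^sub>m 2)"
      using W_unit[of "\<beta> j k"] by (simp add: right_mult_one_mat[of _ 2 2])
  qed
  finally show ?thesis .
qed

lemma trace_rot:
  assumes "n \<ge> 1" "S \<in> carrier_mat (2^n) (2^n)"
    and "\<And>a b. a < 2 \<Longrightarrow> b < 2 \<Longrightarrow> C $$ (a,b) = c * sigma 3 $$ (a,b) + d * sigma 1 $$ (a,b)"
  shows "mtrace (tensor_op n (\<lambda>k. if k = 1 then C else 1\<^sub>m 2) * S) = c * mtrace (Zop n * S) + d * mtrace (Xop n * S)"
  unfolding Zop_def Xop_def
  by (rule trace_lin[OF tensor_carrier(1) tensor_carrier(1) tensor_carrier(1) assms(2)])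
     (use assms in \<open>intro tensor_split1\<close>)

lemma rotZ:
  assumes "n \<ge> 1" "S \<in> carrier_mat (2^n) (2^n)"
  shows "mtrace (Zop n * cj (Vlayer n \<beta> j) S) =
    complex_of_real (cos (2 * \<beta> j 1)) * mtrace (Zop n * S) + complex_of_real (- sin (2 * \<beta> j 1)) * mtrace (Xop n * S)"
proof -
  have "mtrace (Zop n * cj (Vlayer n \<beta> j) S) = mtrace ((dagger (Vlayer n \<beta> j) * Zop n * Vlayer n \<beta> j) * S)"
    using assms by (intro trace_cj) auto
  also have "\<dots> = complex_of_real (cos (2 * \<beta> j 1)) * mtrace (Zop n * S) + complex_of_real (- sin (2 * \<beta> j 1)) * mtrace (Xop n * S)"
    unfolding Zop_def V_conj[OF sigma_carrier] W_Z unfolding Zop_def[symmetric]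
    by (rule trace_rot[OF assms]) (auto simp: less2 sigma1_m2 sigma3_m2 sigma_Suc0)
  finally show ?thesis .
qed

lemma rotX:
  assumes "n \<ge> 1" "S \<in> carrier_mat (2^n) (2^n)"
  shows "mtrace (Xop n * cj (Vlayer n \<beta> j) S) =
    complex_of_real (sin (2 * \<beta> j 1)) * mtrace (Zop n * S) + complex_of_real (cos (2 * \<beta> j 1)) * mtrace (Xop n * S)"
proof -
  have "mtrace (Xop n * cj (Vlayer n \<beta> j) S) = mtrace ((dagger (Vlayer n \<beta> j) * Xop n * Vlayer n \<beta> j) * S)"
    using assms by (intro trace_cj) auto
  also have "\<dots> = complex_of_real (sin (2 * \<beta> j 1)) * mtrace (Zop n * S) + complex_of_real (cos (2 * \<beta> j 1)) * mtrace (Xop n * S)"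
    unfolding Xop_def V_conj[OF sigma_carrier] W_X unfolding Xop_def[symmetric]
    by (rule trace_rot[OF assms]) (auto simp: less2 sigma1_m2 sigma3_m2 sigma_Suc0)
  finally show ?thesis .
qed

definition rho0 :: "nat \<Rightarrow> complex mat" where
  "rho0 n = cj (tensor_op n (\<lambda>_. sigma 1)) (tensor_op n (\<lambda>_. proj0))"

definition Tst :: "nat \<Rightarrow> (nat \<Rightarrow> nat \<Rightarrow> real) \<Rightarrow> nat \<Rightarrow> complex mat" where
  "Tst n \<beta> l = cj (layers n \<beta> l) (rho0 n)"

definition tZ :: "nat \<Rightarrow> complex mat \<Rightarrow> real" where "tZ n S = Re (mtrace (Zop n * S))"
definition tX :: "nat \<Rightarrow> complex mat \<Rightarrow> real" where "tX n S = Re (mtrace (Xop n * S))"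

lemma CZ1_carrier[simp]: "n \<ge> 2 \<Longrightarrow> CZ1 n \<in> carrier_mat (2^n) (2^n)"
  by (rule pmdiag_carrier[OF CZ1_pmdiag])
lemma CZ2_carrier[simp]: "n \<ge> 2 \<Longrightarrow> CZ2 n \<in> carrier_mat (2^n) (2^n)"
  by (rule pmdiag_carrier[OF CZ2_pmdiag])

lemma Ulayer_carrier[simp]: "n \<ge> 2 \<Longrightarrow> Ulayer n \<beta> j \<in> carrier_mat (2^n) (2^n)"
  unfolding Ulayer_def by (auto intro!: mult_carrier_mat[of _ "2^n" "2^n" _ "2^n"])

lemma layers_carrier[simp]: "n \<ge> 2 \<Longrightarrow> layers n \<beta> l \<in> carrier_mat (2^n) (2^n)"
  by (induction l) (auto intro!: mult_carrier_mat[of _ "2^n" "2^n" _ "2^n"])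

lemma rho0_carrier[simp]: "rho0 n \<in> carrier_mat (2^n) (2^n)"
  by (simp add: rho0_def)

lemma Tst_carrier[simp]: "n \<ge> 2 \<Longrightarrow> Tst n \<beta> l \<in> carrier_mat (2^n) (2^n)"
  by (simp add: Tst_def)

lemma Tst_Suc: assumes "n \<ge> 2"
  shows "Tst n \<beta> (Suc l) = cj (CZ1 n) (cj (Vlayer n \<beta> (2 * Suc l)) (cj (CZ2 n) (cj (Vlayer n \<beta> (2 * Suc l - 1)) (Tst n \<beta> l))))"
proof -
  let ?N = "2^n"
  have c: "CZ1 n \<in> carrier_mat ?N ?N" "CZ2 n \<in> carrier_mat ?N ?N" "Vlayer n \<beta> j \<in> carrier_mat ?N ?N"
     "layers n \<beta> l \<in> carrier_mat ?N ?N" "rho0 n \<in> carrier_mat ?N ?N" for j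
    using assms by auto
  have "Tst n \<beta> (Suc l) = cj (Ulayer n \<beta> (Suc l)) (Tst n \<beta> l)"
    unfolding Tst_def using assms by (simp add: cj_mult[of _ ?N])
  also have "\<dots> = cj (CZ1 n) (cj (Vlayer n \<beta> (2 * Suc l)) (cj (CZ2 n) (cj (Vlayer n \<beta> (2 * Suc l - 1)) (Tst n \<beta> l))))"
    unfolding Ulayer_def using c assms
    by (simp add: cj_mult[of _ ?N] mult_carrier_mat[of _ ?N ?N _ ?N])
  finally show ?thesis .
qed

lemma rho_in_eq: assumes "n \<ge> 2"
  shows "rho_in n L \<beta> = cj (Vlayer n \<beta> (2 * L + 1)) (Tst n \<beta> L)"
proof -
  let ?N = "2^n"
  show ?thesis
    unfolding rho_in_def Ucirc_def Tst_def rho0_def cj_def[symmetric] using assms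
    by (simp add: cj_mult[of _ ?N] mult_carrier_mat[of _ ?N ?N _ ?N])
qed

lemma tZ_rot: assumes "n \<ge> 1" "S \<in> carrier_mat (2^n) (2^n)"
  shows "tZ n (cj (Vlayer n \<beta> j) S) = cos (2 * \<beta> j 1) * tZ n S - sin (2 * \<beta> j 1) * tX n S"
  unfolding tZ_def tX_def rotZ[OF assms] by simp

lemma tX_rot: assumes "n \<ge> 1" "S \<in> carrier_mat (2^n) (2^n)"
  shows "tX n (cj (Vlayer n \<beta> j) S) = sin (2 * \<beta> j 1) * tZ n S + cos (2 * \<beta> j 1) * tX n S"
  unfolding tZ_def tX_def rotX[OF assms] by simp

lemma tZ_diag: assumes "pmdiag (2^n) D" "S \<in> carrier_mat (2^n) (2^n)"
  shows "tZ n (cj D S) = tZ n S"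
  unfolding tZ_def trace_cj_diag[OF assms] ..

lemma rot_sq: "(sin t * a + cos t * b)^2 + (cos t * a - sin t * b)^2 = b^2 + a^2" for t a b :: real
proof -
  have g: "(x * a + y * b)^2 + (y * a - x * b)^2 = (x * x + y * y) * (b^2 + a^2)" for x y :: real
    by (simp add: power2_eq_square algebra_simps)
  have "(sin t * a + cos t * b)^2 + (cos t * a - sin t * b)^2 = (sin t * sin t + cos t * cos t) * (b^2 + a^2)"
    by (rule g)
  then show ?thesis by (simp only: sc1 mult_1)
qed

lemma alpha_ge: assumes "n \<ge> 2"
  shows "alpha n (rho_in n L \<beta>) \<ge> (tZ n (Tst n \<beta> L))^2"
proof -
  have n1: "n \<ge> 1" using assms by simp
  have S: "Tst n \<beta> L \<in> carrier_mat (2^n) (2^n)" using assms by simp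
  have "alpha n (rho_in n L \<beta>) = (tX n (rho_in n L \<beta>))^2 + (tZ n (rho_in n L \<beta>))^2"
    by (simp add: alpha_def tX_def tZ_def Xop_def Zop_def)
  also have "\<dots> = (tX n (Tst n \<beta> L))^2 + (tZ n (Tst n \<beta> L))^2"
    unfolding rho_in_eq[OF assms] tX_rot[OF n1 S] tZ_rot[OF n1 S] by (rule rot_sq)
  finally show ?thesis by simp
qed

lemma tZ_rho0: assumes "n \<ge> 1" shows "tZ n (rho0 n) = -1"
proof -
  have r: "rho0 n = tensor_op n (\<lambda>_. proj1)"
  proof -
    have "rho0 n = tensor_op n (\<lambda>_. m2 0 1 1 0) * tensor_op n (\<lambda>_. m2 1 0 0 0) * tensor_op n (\<lambda>_. dagger (m2 0 1 1 0))"
      unfolding rho0_def cj_def sigma1_m2 proj0_m2 by (subst tensor_dagger) auto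
    also have "\<dots> = tensor_op n (\<lambda>_. m2 0 1 1 0 * m2 1 0 0 0 * dagger (m2 0 1 1 0))"
      by (simp only: tensor_mult m2_carrier mult_carrier_mat[OF m2_carrier(1) m2_carrier(1)] dagger_carrier simp_thms)
    also have "\<dots> = tensor_op n (\<lambda>_. proj1)" by (simp add: proj1_m2)
    finally show ?thesis .
  qed
  have "Zop n * rho0 n = tensor_op n (\<lambda>k. (if k = 1 then sigma 3 else 1\<^sub>m 2) * proj1)"
    unfolding r Zop_def by (rule tensor_mult) (auto simp: proj1_m2)
  also have "\<dots> = tensor_op n (\<lambda>k. if k = 1 then m2 0 0 0 (-1) else m2 0 0 0 1)"
    by (intro tensor_cong) (auto simp: sigma3_m2 one2_m2 proj1_m2)
  finally have "mtrace (Zop n * rho0 n) = (\<Prod>k\<in>{1..n}. (if k = 1 then m2 0 0 0 (-1) else m2 0 0 0 1) $$ (0,0) + (if k = 1 then m2 0 0 0 (-1) else m2 0 0 0 1) $$ (1,1))"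
    by (simp add: tensor_trace)
  also have "\<dots> = (\<Prod>k\<in>{1..n}. if k = 1 then -1 else 1)" by (intro prod.cong) auto
  also have "\<dots> = -1" using assms by simp
  finally show ?thesis by (simp add: tZ_def)
qed

lemma Vlayer_cong: "\<beta> j = \<beta>' j \<Longrightarrow> Vlayer n \<beta> j = Vlayer n \<beta>' j"
  by (simp add: Vlayer_def)

lemma layers_cong: "(\<And>j. j \<le> 2 * l \<Longrightarrow> \<beta> j = \<beta>' j) \<Longrightarrow> layers n \<beta> l = layers n \<beta>' l"
proof (induction l)
  case 0 then show ?case by simp
next
  case (Suc l)
  have "Ulayer n \<beta> (Suc l) = Ulayer n \<beta>' (Suc l)"
    unfolding Ulayer_def using Suc.prems by (simp add: Vlayer_cong[of \<beta> _ \<beta>'])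
  then show ?case using Suc by simp
qed

lemma Tst_cong: "(\<And>j. j \<le> 2 * l \<Longrightarrow> \<beta> j = \<beta>' j) \<Longrightarrow> Tst n \<beta> l = Tst n \<beta>' l"
  unfolding Tst_def by (simp add: layers_cong[of l \<beta> \<beta>'])

definition mu :: "real measure" where "mu = uniform_measure lborel {0..2*pi}"

lemma prob_mu: "prob_space mu"
  unfolding mu_def by (rule prob_space_uniform_measure) auto

lemma sets_mu[simp, measurable_cong]: "sets mu = sets borel"
  by (simp add: mu_def)

lemma psf_mu: "product_sigma_finite (\<lambda>_. mu)"
  unfolding product_sigma_finite_def
  using prob_mu prob_space_imp_sigma_finite by blast

lemma trig_id: "(cos (2*y) * a - sin (2*y) * b)^2 = (a^2+b^2)/2 + (a^2-b^2)/2 * cos (4*y) - a*b * sin (4*y)"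
  for y a b :: real
proof -
  have c4: "cos (4*y) = cos (2*y) * cos (2*y) - sin (2*y) * sin (2*y)"
    using cos_double[of "2*y"] by (simp add: power2_eq_square)
  have s4: "sin (4*y) = 2 * sin (2*y) * cos (2*y)"
    using sin_double[of "2*y"] by simp
  have sc: "sin (2*y) * sin (2*y) + cos (2*y) * cos (2*y) = 1" using sin_cos_squared_add3[of "2*y"] by (simp add: add.commute)
  have g: "(u * a - v * b)^2 = (a^2+b^2)/2 * (v * v + u * u) + (a^2-b^2)/2 * (u * u - v * v) - a*b * (2 * v * u)" for u v :: real
    by (simp add: power2_eq_square field_simps)
  show ?thesis unfolding c4 s4 g sc by simp
qed

lemma has_int_trig:
  fixes a b :: real
  shows "((\<lambda>y. (cos (2*y) * a - sin (2*y) * b)^2) has_integral (pi * (a^2+b^2))) {0..2*pi}"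
proof -
  define G where "G y = (a^2+b^2)/2 * y + (a^2-b^2)/8 * sin (4*y) + a*b/4 * cos (4*y)" for y :: real
  have d: "(G has_real_derivative ((a^2+b^2)/2 + (a^2-b^2)/2 * cos (4*y) - a*b * sin (4*y))) (at y)" for y
    unfolding G_def by (auto intro!: derivative_eq_intros simp: field_simps)
  have "((\<lambda>y. (a^2+b^2)/2 + (a^2-b^2)/2 * cos (4*y) - a*b * sin (4*y)) has_integral (G (2*pi) - G 0)) {0..2*pi}"
  proof (rule fundamental_theorem_of_calculus)
    show "0 \<le> 2 * pi" by simp
    fix x :: real
    show "(G has_vector_derivative (a^2+b^2)/2 + (a^2-b^2)/2 * cos (4*x) - a*b * sin (4*x)) (at x within {0..2*pi})"
      by (rule has_real_derivative_iff_has_vector_derivative[THEN iffD1, OF has_field_derivative_at_within[OF d]])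
  qed
  moreover have "G (2*pi) - G 0 = pi * (a^2+b^2)"
  proof -
    have "sin (4*(2*pi)) = 0" using sin_npi[of 8] by (simp add: mult.assoc)
    moreover have "cos (4*(2*pi)) = 1" using cos_npi[of 8] by (simp add: mult.assoc)
    ultimately show ?thesis unfolding G_def by (simp add: algebra_simps)
  qed
  ultimately show ?thesis by (simp add: trig_id)
qed

lemma inner_int:
  fixes a b r :: real
  assumes "r \<ge> 0"
  shows "(\<integral>\<^sup>+y. ennreal (r * (cos (2*y) * a - sin (2*y) * b)^2) \<partial>mu) = ennreal (r * ((a^2+b^2)/2))"
proof -
  have m: "(\<lambda>y. ennreal ((cos (2*y) * a - sin (2*y) * b)^2)) \<in> borel_measurable lborel" by measurable
  have "(\<integral>\<^sup>+y. ennreal (r * (cos (2*y) * a - sin (2*y) * b)^2) \<partial>mu)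
      = (\<integral>\<^sup>+y. ennreal r * ennreal ((cos (2*y) * a - sin (2*y) * b)^2) \<partial>mu)"
    using assms by (intro nn_integral_cong) (simp add: ennreal_mult)
  also have "\<dots> = ennreal r * (\<integral>\<^sup>+y. ennreal ((cos (2*y) * a - sin (2*y) * b)^2) \<partial>mu)"
    by (rule nn_integral_cmult) (simp add: mu_def measurable_cong_sets[OF sets_mu refl])
  also have "(\<integral>\<^sup>+y. ennreal ((cos (2*y) * a - sin (2*y) * b)^2) \<partial>mu)
     = (\<integral>\<^sup>+y. ennreal ((cos (2*y) * a - sin (2*y) * b)^2) * indicator {0..2*pi} y \<partial>lborel) / emeasure lborel {0..2*pi}"
    unfolding mu_def by (rule nn_integral_uniform_measure[OF m]) simp
  also have "(\<integral>\<^sup>+y. ennreal ((cos (2*y) * a - sin (2*y) * b)^2) * indicator {0..2*pi} y \<partial>lborel) = ennreal (pi * (a^2+b^2))"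
    by (rule nn_integral_has_integral_lebesgue'[OF _ has_int_trig]) simp
  also have "emeasure lborel {0..2*pi} = ennreal (2*pi)" by simp
  also have "ennreal (pi * (a^2+b^2)) / ennreal (2*pi) = ennreal ((a^2+b^2)/2)"
    by (subst divide_ennreal) (auto simp: pi_gt_zero)
  finally show ?thesis using assms by (simp add: ennreal_mult[symmetric])
qed

lemma key:
  fixes A B :: "(nat \<times> nat \<Rightarrow> real) \<Rightarrow> real" and I :: "(nat \<times> nat) set"
  assumes fin: "finite I" and i: "i \<notin> I"
    and mA[measurable]: "A \<in> borel_measurable (PiM (insert i I) (\<lambda>_. mu))"
    and mB[measurable]: "B \<in> borel_measurable (PiM (insert i I) (\<lambda>_. mu))"
    and iA: "\<And>x y. A (x(i := y)) = A x" and iB: "\<And>x y. B (x(i := y)) = B x"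
    and r: "r \<ge> 0"
  shows "(\<integral>\<^sup>+x. ennreal (r/2 * (A x)^2) \<partial>PiM (insert i I) (\<lambda>_. mu))
     \<le> (\<integral>\<^sup>+x. ennreal (r * (cos (2 * x i) * A x - sin (2 * x i) * B x)^2) \<partial>PiM (insert i I) (\<lambda>_. mu))"
proof -
  interpret P: product_sigma_finite "\<lambda>_. mu" by (rule psf_mu)
  interpret pm: prob_space mu by (rule prob_mu)
  have mi: "(\<lambda>x. x i) \<in> borel_measurable (PiM (insert i I) (\<lambda>_. mu))"
    using measurable_component_singleton[of i "insert i I" "\<lambda>_. mu"]
    by (simp add: measurable_cong_sets[OF refl sets_mu])
  have mf: "(\<lambda>x. ennreal (r * (cos (2 * x i) * A x - sin (2 * x i) * B x)^2)) \<in> borel_measurable (PiM (insert i I) (\<lambda>_. mu))"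
    using mi by measurable
  have mg: "(\<lambda>x. ennreal (r/2 * (A x)^2)) \<in> borel_measurable (PiM (insert i I) (\<lambda>_. mu))"
    by measurable
  have "(\<integral>\<^sup>+x. ennreal (r/2 * (A x)^2) \<partial>PiM (insert i I) (\<lambda>_. mu))
     = (\<integral>\<^sup>+x. (\<integral>\<^sup>+y. ennreal (r/2 * (A (x(i := y)))^2) \<partial>mu) \<partial>PiM I (\<lambda>_. mu))"
    by (rule P.product_nn_integral_insert[OF fin i mg])
  also have "\<dots> = (\<integral>\<^sup>+x. ennreal (r/2 * (A x)^2) \<partial>PiM I (\<lambda>_. mu))"
    by (simp add: iA pm.emeasure_space_1)
  also have "\<dots> \<le> (\<integral>\<^sup>+x. ennreal (r * (((A x)^2 + (B x)^2)/2)) \<partial>PiM I (\<lambda>_. mu))"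
    using r by (intro nn_integral_mono ennreal_leI) (simp add: field_simps)
  also have "\<dots> = (\<integral>\<^sup>+x. (\<integral>\<^sup>+y. ennreal (r * (cos (2 * y) * A x - sin (2 * y) * B x)^2) \<partial>mu) \<partial>PiM I (\<lambda>_. mu))"
    by (intro nn_integral_cong) (simp add: inner_int[OF r])
  also have "\<dots> = (\<integral>\<^sup>+x. (\<integral>\<^sup>+y. ennreal (r * (cos (2 * (x(i := y)) i) * A (x(i := y)) - sin (2 * (x(i := y)) i) * B (x(i := y)))^2) \<partial>mu) \<partial>PiM I (\<lambda>_. mu))"
    by (simp add: iA iB)
  also have "\<dots> = (\<integral>\<^sup>+x. ennreal (r * (cos (2 * x i) * A x - sin (2 * x i) * B x)^2) \<partial>PiM (insert i I) (\<lambda>_. mu))"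
    by (rule P.product_nn_integral_insert[OF fin i mf, symmetric])
  finally show ?thesis .
qed

definition goodm :: "(nat \<times> nat \<Rightarrow> real) measure \<Rightarrow> nat \<Rightarrow> real \<Rightarrow> ((nat \<times> nat \<Rightarrow> real) \<Rightarrow> complex mat) \<Rightarrow> bool" where
  "goodm M N c F \<longleftrightarrow> (\<forall>x. F x \<in> carrier_mat N N) \<and> (\<forall>i<N. \<forall>j<N. (\<lambda>x. F x $$ (i,j)) \<in> borel_measurable M)
     \<and> (\<forall>x. \<forall>i<N. \<forall>j<N. cmod (F x $$ (i,j)) \<le> c) \<and> c \<ge> 0"

lemma goodm_const:
  assumes "A \<in> carrier_mat N N" "\<And>i j. i < N \<Longrightarrow> j < N \<Longrightarrow> cmod (A $$ (i,j)) \<le> c" "c \<ge> 0"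
  shows "goodm M N c (\<lambda>_. A)"
  using assms unfolding goodm_def by auto

lemma goodm_mult:
  assumes "goodm M N a F" "goodm M N b G"
  shows "goodm M N (N * a * b) (\<lambda>x. F x * G x)"
proof -
  have F: "\<And>x. F x \<in> carrier_mat N N" "\<And>i j. i < N \<Longrightarrow> j < N \<Longrightarrow> (\<lambda>x. F x $$ (i,j)) \<in> borel_measurable M"
    "\<And>x i j. i < N \<Longrightarrow> j < N \<Longrightarrow> cmod (F x $$ (i,j)) \<le> a" "a \<ge> 0"
    using assms(1) unfolding goodm_def by auto
  have G: "\<And>x. G x \<in> carrier_mat N N" "\<And>i j. i < N \<Longrightarrow> j < N \<Longrightarrow> (\<lambda>x. G x $$ (i,j)) \<in> borel_measurable M"
    "\<And>x i j. i < N \<Longrightarrow> j < N \<Longrightarrow> cmod (G x $$ (i,j)) \<le> b" "b \<ge> 0"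
    using assms(2) unfolding goodm_def by auto
  have e: "(F x * G x) $$ (i,j) = (\<Sum>m<N. F x $$ (i,m) * G x $$ (m,j))" if "i < N" "j < N" for x i j
    using F(1) G(1) that by (rule mult_entry)
  have meas: "(\<lambda>x. (F x * G x) $$ (i,j)) \<in> borel_measurable M" if "i < N" "j < N" for i j
  proof -
    have "(\<lambda>x. \<Sum>m<N. F x $$ (i,m) * G x $$ (m,j)) \<in> borel_measurable M"
      using F(2) G(2) that by (intro borel_measurable_sum borel_measurable_times) auto
    then show ?thesis using e[OF that] by simp
  qed
  have bnd: "cmod ((F x * G x) $$ (i,j)) \<le> N * a * b" if "i < N" "j < N" for x i j
  proof -
    have "cmod ((F x * G x) $$ (i,j)) \<le> (\<Sum>m<N. cmod (F x $$ (i,m) * G x $$ (m,j)))"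
      unfolding e[OF that] by (rule norm_sum)
    also have "\<dots> \<le> (\<Sum>m<N. a * b)"
      using F(3,4) G(3,4) that by (intro sum_mono) (auto simp: norm_mult intro!: mult_mono)
    finally show ?thesis by simp
  qed
  have "F x * G x \<in> carrier_mat N N" for x using F(1)[of x] G(1)[of x] by (rule mult_carrier_mat)
  then show ?thesis unfolding goodm_def using F(4) G(4) meas bnd by auto
qed

lemma measurable_cnj[measurable]: "cnj \<in> borel_measurable borel"
  by (rule borel_measurable_continuous_onI) (intro continuous_on_cnj continuous_on_id)

lemma goodm_dagger:
  assumes "goodm M N c F"
  shows "goodm M N c (\<lambda>x. dagger (F x))"
proof -
  have F: "\<And>x. F x \<in> carrier_mat N N" "\<And>i j. i < N \<Longrightarrow> j < N \<Longrightarrow> (\<lambda>x. F x $$ (i,j)) \<in> borel_measurable M"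
    "\<And>x i j. i < N \<Longrightarrow> j < N \<Longrightarrow> cmod (F x $$ (i,j)) \<le> c" "c \<ge> 0"
    using assms(1) unfolding goodm_def by auto
  have e: "dagger (F x) $$ (i,j) = cnj (F x $$ (j,i))" if "i < N" "j < N" for x i j
    using F(1)[of x] that by (simp add: dagger_idx)
  have meas: "(\<lambda>x. dagger (F x) $$ (i,j)) \<in> borel_measurable M" if "i < N" "j < N" for i j
    using F(2)[OF that(2,1)] unfolding e[OF that] by measurable
  show ?thesis unfolding goodm_def using F e meas by auto
qed

lemma goodm_cj:
  assumes "goodm M N a A" "goodm M N b S"
  shows "\<exists>c. goodm M N c (\<lambda>x. cj (A x) (S x))"
  unfolding cj_def using goodm_mult[OF goodm_mult[OF assms] goodm_dagger[OF assms(1)]] by blast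

lemma goodm_tensor:
  assumes "\<And>k a b. k \<in> {1..n} \<Longrightarrow> a < 2 \<Longrightarrow> b < 2 \<Longrightarrow> (\<lambda>x. G x k $$ (a,b)) \<in> borel_measurable M"
    "\<And>x k a b. k \<in> {1..n} \<Longrightarrow> a < 2 \<Longrightarrow> b < 2 \<Longrightarrow> cmod (G x k $$ (a,b)) \<le> 1"
  shows "goodm M (2^n) 1 (\<lambda>x. tensor_op n (G x))"
proof -
  have meas: "(\<lambda>x. tensor_op n (G x) $$ (i,j)) \<in> borel_measurable M" if "i < 2^n" "j < 2^n" for i j
  proof -
    have "(\<lambda>x. \<Prod>k\<in>{1..n}. G x k $$ (qbit n k i, qbit n k j)) \<in> borel_measurable M"
      using assms(1) by (intro borel_measurable_prod) auto
    then show ?thesis using that by (simp add: tensor_idx)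
  qed
  have bnd: "cmod (tensor_op n (G x) $$ (i,j)) \<le> 1" if "i < 2^n" "j < 2^n" for x i j
  proof -
    have "cmod (\<Prod>k\<in>{1..n}. G x k $$ (qbit n k i, qbit n k j)) \<le> (\<Prod>k\<in>{1..n}. cmod (G x k $$ (qbit n k i, qbit n k j)))"
      by (rule norm_prod_le)
    also have "\<dots> \<le> 1" using assms(2) by (intro prod_le_1) auto
    finally show ?thesis using that by (simp add: tensor_idx)
  qed
  show ?thesis unfolding goodm_def using meas bnd by auto
qed

lemma goodm_pmdiag:
  assumes "pmdiag N D" shows "goodm M N 1 (\<lambda>_. D)"
proof -
  obtain s where s: "\<forall>i. s i = 1 \<or> s i = -1" "D = mat N N (\<lambda>(i,j). if i = j then s i else 0)"
    using assms by (auto simp: pmdiag_def)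
  have "cmod (D $$ (i,j)) \<le> 1" if "i < N" "j < N" for i j
    using that s(1)[rule_format, of i] unfolding s(2) by auto
  then show ?thesis using pmdiag_carrier[OF assms] by (intro goodm_const) auto
qed

lemma goodm_Vlayer:
  assumes "\<And>k. k \<in> {1..n} \<Longrightarrow> (\<lambda>x. x (j,k)) \<in> borel_measurable M"
  shows "goodm M (2^n) 1 (\<lambda>x. Vlayer n (\<lambda>j k. x (j,k)) j)"
  unfolding Vlayer_def
proof (rule goodm_tensor)
  fix k a b assume k: "k \<in> {1..n}" and ab: "a < (2::nat)" "b < (2::nat)"
  have m: "(\<lambda>x. x (j,k)) \<in> borel_measurable M" by (rule assms[OF k])
  show "(\<lambda>x. Wgate (x (j,k)) $$ (a,b)) \<in> borel_measurable M"
    using ab m unfolding Wgate_m2 by (auto simp: less2)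
  fix x
  show "cmod (Wgate (x (j,k)) $$ (a,b)) \<le> 1"
    using ab unfolding Wgate_m2 by (auto simp: less2)
qed

lemma goodm_const_ex:
  assumes "A \<in> carrier_mat N N"
  shows "\<exists>c. goodm M N c (\<lambda>_. A)"
proof -
  let ?c = "\<Sum>i<N. \<Sum>j<N. cmod (A $$ (i,j))"
  have "cmod (A $$ (i,j)) \<le> ?c" if "i < N" "j < N" for i j
  proof -
    have "cmod (A $$ (i,j)) \<le> (\<Sum>j<N. cmod (A $$ (i,j)))"
      using that by (intro member_le_sum) auto
    also have "\<dots> \<le> ?c" using that by (intro member_le_sum[where f = "\<lambda>i. \<Sum>j<N. cmod (A $$ (i,j))"]) (auto intro: sum_nonneg)
    finally show ?thesis .
  qed
  moreover have "?c \<ge> 0" by (intro sum_nonneg) auto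
  ultimately show ?thesis using assms by (intro exI goodm_const) auto
qed

lemma goodm_trace:
  assumes "goodm M N c F"
  shows "(\<lambda>x. Re (mtrace (F x))) \<in> borel_measurable M" "\<And>x. \<bar>Re (mtrace (F x))\<bar> \<le> N * c"
proof -
  have F: "\<And>x. F x \<in> carrier_mat N N" "\<And>i j. i < N \<Longrightarrow> j < N \<Longrightarrow> (\<lambda>x. F x $$ (i,j)) \<in> borel_measurable M"
    "\<And>x i j. i < N \<Longrightarrow> j < N \<Longrightarrow> cmod (F x $$ (i,j)) \<le> c"
    using assms(1) unfolding goodm_def by auto
  have e: "mtrace (F x) = (\<Sum>i<N. F x $$ (i,i))" for x using F(1)[of x] by (simp add: mtrace_def)
  have "(\<lambda>x. \<Sum>i<N. F x $$ (i,i)) \<in> borel_measurable M" using F(2) by (intro borel_measurable_sum) auto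
  then show "(\<lambda>x. Re (mtrace (F x))) \<in> borel_measurable M" unfolding e by measurable
  fix x
  have "\<bar>Re (mtrace (F x))\<bar> \<le> cmod (mtrace (F x))" by (rule abs_Re_le_cmod)
  also have "\<dots> \<le> (\<Sum>i<N. cmod (F x $$ (i,i)))" unfolding e by (rule norm_sum)
  also have "\<dots> \<le> (\<Sum>i<N. c)" using F(3) by (intro sum_mono) auto
  finally show "\<bar>Re (mtrace (F x))\<bar> \<le> N * c" by simp
qed

lemma goodm_tZX:
  assumes "goodm M (2^n) c F"
  shows "\<exists>C. (\<lambda>x. tZ n (F x)) \<in> borel_measurable M \<and> (\<lambda>x. tX n (F x)) \<in> borel_measurable M
     \<and> (\<forall>x. \<bar>tZ n (F x)\<bar> \<le> C \<and> \<bar>tX n (F x)\<bar> \<le> C)"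
proof -
  obtain cz where z: "goodm M (2^n) cz (\<lambda>_. Zop n)" using goodm_const_ex[OF Zop_carrier] by blast
  obtain cx where xx: "goodm M (2^n) cx (\<lambda>_. Xop n)" using goodm_const_ex[OF Xop_carrier] by blast
  note gz = goodm_trace[OF goodm_mult[OF z assms]]
  note gx = goodm_trace[OF goodm_mult[OF xx assms]]
  show ?thesis unfolding tZ_def tX_def
    by (rule exI[of _ "max (2^n * (2^n * cz * c)) (2^n * (2^n * cx * c))"]) (use gz gx in \<open>auto simp: le_max_iff_disj\<close>)
qed

context
  fixes n L :: nat
  assumes n2: "n \<ge> 2"
begin

abbreviation "SS \<equiv> {1..2 * L + 1} \<times> {1..n}"
abbreviation "MM \<equiv> PiM SS (\<lambda>_::nat\<times>nat. mu)"

lemma MM_eq: "beta_measure n L = MM" by (simp add: beta_measure_def mu_def)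

lemma comp_meas: "p \<in> SS \<Longrightarrow> (\<lambda>x. x p) \<in> borel_measurable MM"
  using measurable_component_singleton[of p SS "\<lambda>_. mu"]
  by (simp add: measurable_cong_sets[OF refl sets_mu])

lemma good_V: "j \<in> {1..2 * L + 1} \<Longrightarrow> goodm MM (2^n) 1 (\<lambda>x. Vlayer n (\<lambda>j k. x (j,k)) j)"
  by (rule goodm_Vlayer) (auto intro!: comp_meas)

lemma good_layers: "l \<le> L \<Longrightarrow> \<exists>c. goodm MM (2^n) c (\<lambda>x. layers n (\<lambda>j k. x (j,k)) l)"
proof (induction l)
  case 0
  show ?case using goodm_const_ex[of "1\<^sub>m (2^n)" "2^n"] by simp
next
  case (Suc l)
  obtain c where c: "goodm MM (2^n) c (\<lambda>x. layers n (\<lambda>j k. x (j,k)) l)" using Suc by auto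
  obtain c1 where c1: "goodm MM (2^n) c1 (\<lambda>_. CZ1 n)" using goodm_const_ex[OF CZ1_carrier[OF n2]] by blast
  obtain c2 where c2: "goodm MM (2^n) c2 (\<lambda>_. CZ2 n)" using goodm_const_ex[OF CZ2_carrier[OF n2]] by blast
  have v1: "goodm MM (2^n) 1 (\<lambda>x. Vlayer n (\<lambda>j k. x (j,k)) (2 * Suc l))" using Suc.prems by (intro good_V) auto
  have v2: "goodm MM (2^n) 1 (\<lambda>x. Vlayer n (\<lambda>j k. x (j,k)) (2 * Suc l - 1))" using Suc.prems by (intro good_V) auto
  show ?case unfolding layers.simps Ulayer_def
    using goodm_mult[OF goodm_mult[OF goodm_mult[OF goodm_mult[OF c1 v1] c2] v2] c] by blast
qed

lemma good_Tst: "l \<le> L \<Longrightarrow> \<exists>c. goodm MM (2^n) c (\<lambda>x. Tst n (\<lambda>j k. x (j,k)) l)"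
proof -
  assume "l \<le> L"
  then obtain c where c: "goodm MM (2^n) c (\<lambda>x. layers n (\<lambda>j k. x (j,k)) l)" using good_layers by blast
  obtain c0 where c0: "goodm MM (2^n) c0 (\<lambda>_. rho0 n)" using goodm_const_ex[OF rho0_carrier] by blast
  show ?thesis unfolding Tst_def using goodm_cj[OF c c0] .
qed

end

lemma alpha_eq: "alpha n S = (tX n S)^2 + (tZ n S)^2"
  by (simp add: alpha_def tX_def tZ_def Xop_def Zop_def)

lemma prob_MM: "prob_space (PiM I (\<lambda>_::nat\<times>nat. mu))"
  by (rule prob_space_PiM) (rule prob_mu)

context
  fixes n L :: nat
  assumes n2: "n \<ge> 2"
begin

lemma main_ind: "l \<le> L \<Longrightarrow> ennreal ((1/4)^l) \<le> (\<integral>\<^sup>+x. ennreal ((tZ n (Tst n (\<lambda>j k. x (j,k)) l))^2) \<partial>MM n L)"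
proof (induction l)
  case 0
  have n1: "n \<ge> 1" using n2 by simp
  have "tZ n (Tst n \<beta> 0) = -1" for \<beta>
    unfolding Tst_def layers.simps using tZ_diag[OF pmdiag_one rho0_carrier] tZ_rho0[OF n1] by simp
  then have "(\<integral>\<^sup>+x. ennreal ((tZ n (Tst n (\<lambda>j k. x (j,k)) 0))^2) \<partial>MM n L) = (\<integral>\<^sup>+x. 1 \<partial>MM n L)"
    by simp
  also have "\<dots> = 1" using prob_space.emeasure_space_1[OF prob_MM] by simp
  finally show ?case by simp
next
  case (Suc l)
  define j2 where "j2 = 2 * Suc l"
  define j1 where "j1 = 2 * Suc l - 1"
  define T where "T x = Tst n (\<lambda>j k. x (j,k)) l" for x :: "nat \<times> nat \<Rightarrow> real"
  define s2 where "s2 x = cj (CZ2 n) (cj (Vlayer n (\<lambda>j k. x (j,k)) j1) (T x))" for x :: "nat \<times> nat \<Rightarrow> real"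
  have n1: "n \<ge> 1" using n2 by simp
  have Tc: "T x \<in> carrier_mat (2^n) (2^n)" for x using n2 by (simp add: T_def)
  have s1c: "cj (Vlayer n (\<lambda>j k. x (j,k)) j1) (T x) \<in> carrier_mat (2^n) (2^n)" for x using Tc by simp
  have s2c: "s2 x \<in> carrier_mat (2^n) (2^n)" for x unfolding s2_def using s1c CZ2_carrier[OF n2] by simp
  have eq2: "tZ n (Tst n (\<lambda>j k. x (j,k)) (Suc l)) = cos (2 * x (j2,1)) * tZ n (s2 x) - sin (2 * x (j2,1)) * tX n (s2 x)" for x
  proof -
    have "Tst n (\<lambda>j k. x (j,k)) (Suc l) = cj (CZ1 n) (cj (Vlayer n (\<lambda>j k. x (j,k)) j2) (s2 x))"
      unfolding Tst_Suc[OF n2] s2_def T_def j1_def j2_def ..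
    then show ?thesis
      using tZ_diag[OF CZ1_pmdiag[OF n2]] tZ_rot[OF n1 s2c] s2c by simp
  qed
  have eq1: "tZ n (s2 x) = cos (2 * x (j1,1)) * tZ n (T x) - sin (2 * x (j1,1)) * tX n (T x)" for x
    unfolding s2_def using tZ_diag[OF CZ2_pmdiag[OF n2] s1c] tZ_rot[OF n1 Tc] by simp
  have j1S: "(j1, 1) \<in> SS n L" and j2S: "(j2,1) \<in> SS n L" using Suc.prems n2 by (auto simp: j1_def j2_def)
  have j12: "j1 \<noteq> j2" "j1 > 2 * l" "j2 > 2 * l" by (auto simp: j1_def j2_def)
  obtain cT where cT: "goodm (MM n L) (2^n) cT T" using good_Tst[OF n2, of l L] Suc.prems unfolding T_def by auto
  obtain c2 where c2: "goodm (MM n L) (2^n) c2 s2"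
  proof -
    obtain cz where cz: "goodm (MM n L) (2^n) cz (\<lambda>_. CZ2 n)" using goodm_const_ex[OF CZ2_carrier[OF n2]] by blast
    have v: "goodm (MM n L) (2^n) 1 (\<lambda>x. Vlayer n (\<lambda>j k. x (j,k)) j1)" using Suc.prems by (intro good_V[OF n2]) (auto simp: j1_def)
    obtain c1 where c1: "goodm (MM n L) (2^n) c1 (\<lambda>x. cj (Vlayer n (\<lambda>j k. x (j,k)) j1) (T x))" using goodm_cj[OF v cT] by blast
    show ?thesis using goodm_cj[OF cz c1] that unfolding s2_def by blast
  qed
  obtain CT where mT: "(\<lambda>x. tZ n (T x)) \<in> borel_measurable (MM n L)" "(\<lambda>x. tX n (T x)) \<in> borel_measurable (MM n L)"
    using goodm_tZX[OF cT] by blast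
  obtain C2 where m2: "(\<lambda>x. tZ n (s2 x)) \<in> borel_measurable (MM n L)" "(\<lambda>x. tX n (s2 x)) \<in> borel_measurable (MM n L)"
    using goodm_tZX[OF c2] by blast
  have indT: "T (x(p := y)) = T x" if "fst p > 2 * l" for x p y
    unfolding T_def using that by (intro Tst_cong ext) auto
  have ind2: "s2 (x((j2,1) := y)) = s2 x" for x y
  proof -
    have "Vlayer n (\<lambda>j k. (x((j2,1) := y)) (j,k)) j1 = Vlayer n (\<lambda>j k. x (j,k)) j1"
      using j12 by (intro Vlayer_cong) auto
    then show ?thesis unfolding s2_def using indT[of "(j2,1)" x y] j12 by simp
  qed
  have ins2: "insert (j2,1) (SS n L - {(j2,1)}) = SS n L" using j2S by auto
  have ins1: "insert (j1,1) (SS n L - {(j1,1)}) = SS n L" using j1S by auto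
  have fin2: "finite (SS n L - {(j2,1)})" and fin1: "finite (SS n L - {(j1,1)})" by auto
  have k2: "(\<integral>\<^sup>+x. ennreal (1/2 * (tZ n (s2 x))^2) \<partial>MM n L)
      \<le> (\<integral>\<^sup>+x. ennreal (1 * (cos (2 * x (j2,1)) * tZ n (s2 x) - sin (2 * x (j2,1)) * tX n (s2 x))^2) \<partial>MM n L)"
    using key[OF fin2, of "(j2,1)" "\<lambda>x. tZ n (s2 x)" "\<lambda>x. tX n (s2 x)" 1, unfolded ins2] m2 ind2 by simp
  have k1: "(\<integral>\<^sup>+x. ennreal ((1/2)/2 * (tZ n (T x))^2) \<partial>MM n L)
      \<le> (\<integral>\<^sup>+x. ennreal ((1/2) * (cos (2 * x (j1,1)) * tZ n (T x) - sin (2 * x (j1,1)) * tX n (T x))^2) \<partial>MM n L)"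
    using key[OF fin1, of "(j1,1)" "\<lambda>x. tZ n (T x)" "\<lambda>x. tX n (T x)" "1/2", unfolded ins1] mT indT[of "(j1,1)"] j12 by simp
  have "ennreal ((1/4)^Suc l) = ennreal (1/4) * ennreal ((1/4)^l)" by (simp add: ennreal_mult[symmetric])
  also have "\<dots> \<le> ennreal (1/4) * (\<integral>\<^sup>+x. ennreal ((tZ n (T x))^2) \<partial>MM n L)"
    using Suc.IH Suc.prems unfolding T_def by (intro mult_left_mono) auto
  also have "\<dots> = (\<integral>\<^sup>+x. ennreal ((1/2)/2 * (tZ n (T x))^2) \<partial>MM n L)"
    by (subst nn_integral_cmult[symmetric]) (use mT in \<open>auto simp: ennreal_mult[symmetric]\<close>)
  also have "\<dots> \<le> (\<integral>\<^sup>+x. ennreal ((1/2) * (cos (2 * x (j1,1)) * tZ n (T x) - sin (2 * x (j1,1)) * tX n (T x))^2) \<partial>MM n L)"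
    by (rule k1)
  also have "\<dots> = (\<integral>\<^sup>+x. ennreal (1/2 * (tZ n (s2 x))^2) \<partial>MM n L)"
    unfolding eq1 ..
  also have "\<dots> \<le> (\<integral>\<^sup>+x. ennreal (1 * (cos (2 * x (j2,1)) * tZ n (s2 x) - sin (2 * x (j2,1)) * tX n (s2 x))^2) \<partial>MM n L)"
    by (rule k2)
  also have "\<dots> = (\<integral>\<^sup>+x. ennreal ((tZ n (Tst n (\<lambda>j k. x (j,k)) (Suc l)))^2) \<partial>MM n L)"
    unfolding eq2 by simp
  finally show ?case .
qed

end

lemma powr_quarter: "2 powr (- 2 * real L) = (1/4::real)^L"
proof -
  have "2 powr (- 2 * real L) = inverse (2 powr (real (2 * L)))"
    by (simp add: powr_minus)
  also have "2 powr (real (2 * L)) = (2::real) ^ (2 * L)" by (rule powr_realpow) simp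
  also have "(2::real) ^ (2 * L) = 4 ^ L" by (simp add: power_mult)
  finally show ?thesis by (simp add: power_one_over inverse_eq_divide)
qed

theorem theorem3:
  fixes n L :: nat
  assumes "even n" and "n \<ge> 2" and "L \<ge> 1"
  shows "(\<integral>b. alpha n (rho_in n L (\<lambda>j k. b (j, k))) \<partial>beta_measure n L) \<ge> 2 powr (- 2 * real L)"
proof -
  have n2: "n \<ge> 2" by (rule assms(2))
  define f where "f x = alpha n (rho_in n L (\<lambda>j k. x (j, k)))" for x :: "nat \<times> nat \<Rightarrow> real"
  obtain cr where cr: "goodm (MM n L) (2^n) cr (\<lambda>x. rho_in n L (\<lambda>j k. x (j, k)))"
  proof -
    have v: "goodm (MM n L) (2^n) 1 (\<lambda>x. Vlayer n (\<lambda>j k. x (j,k)) (2 * L + 1))" by (intro good_V[OF n2]) auto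
    obtain cT where cT: "goodm (MM n L) (2^n) cT (\<lambda>x. Tst n (\<lambda>j k. x (j,k)) L)" using good_Tst[OF n2, of L L] by auto
    show ?thesis using goodm_cj[OF v cT] that unfolding rho_in_eq[OF n2] by blast
  qed
  obtain C where C: "(\<lambda>x. tZ n (rho_in n L (\<lambda>j k. x (j, k)))) \<in> borel_measurable (MM n L)"
     "(\<lambda>x. tX n (rho_in n L (\<lambda>j k. x (j, k)))) \<in> borel_measurable (MM n L)"
     "\<And>x. \<bar>tZ n (rho_in n L (\<lambda>j k. x (j, k)))\<bar> \<le> C \<and> \<bar>tX n (rho_in n L (\<lambda>j k. x (j, k)))\<bar> \<le> C"
    using goodm_tZX[OF cr] by blast
  have fm: "f \<in> borel_measurable (MM n L)" unfolding f_def alpha_eq using C(1,2) by measurable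
  have f0: "f x \<ge> 0" for x unfolding f_def alpha_eq by simp
  have fb: "f x \<le> 2 * C^2" for x
  proof -
    have "(tX n (rho_in n L (\<lambda>j k. x (j, k))))^2 \<le> C^2" "(tZ n (rho_in n L (\<lambda>j k. x (j, k))))^2 \<le> C^2"
      using C(3)[of x] by (auto intro!: power2_le_iff_abs_le[THEN iffD2] order_trans[OF abs_ge_zero])
    then show ?thesis unfolding f_def alpha_eq by simp
  qed
  have int: "(\<integral>x. f x \<partial>MM n L) = enn2real (\<integral>\<^sup>+x. ennreal (f x) \<partial>MM n L)"
    using fm f0 by (intro integral_eq_nn_integral) auto
  have lo: "ennreal ((1/4)^L) \<le> (\<integral>\<^sup>+x. ennreal (f x) \<partial>MM n L)"
  proof -
    have "ennreal ((1/4)^L) \<le> (\<integral>\<^sup>+x. ennreal ((tZ n (Tst n (\<lambda>j k. x (j,k)) L))^2) \<partial>MM n L)"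
      by (rule main_ind[OF n2]) simp
    also have "\<dots> \<le> (\<integral>\<^sup>+x. ennreal (f x) \<partial>MM n L)"
      unfolding f_def using alpha_ge[OF n2] by (intro nn_integral_mono ennreal_leI) auto
    finally show ?thesis .
  qed
  have hi: "(\<integral>\<^sup>+x. ennreal (f x) \<partial>MM n L) < \<infinity>"
  proof -
    have "(\<integral>\<^sup>+x. ennreal (f x) \<partial>MM n L) \<le> (\<integral>\<^sup>+x. ennreal (2 * C^2) \<partial>MM n L)"
      using fb by (intro nn_integral_mono ennreal_leI) auto
    also have "\<dots> = ennreal (2 * C^2)" using prob_space.emeasure_space_1[OF prob_MM] by simp
    finally show ?thesis by (simp add: le_less_trans)
  qed
  have "2 powr (- 2 * real L) = enn2real (ennreal ((1/4)^L))" unfolding powr_quarter by simp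
  also have "\<dots> \<le> enn2real (\<integral>\<^sup>+x. ennreal (f x) \<partial>MM n L)"
    by (rule enn2real_mono[OF lo]) (use hi in simp)
  also have "\<dots> = (\<integral>x. f x \<partial>MM n L)" using int by simp
  finally have "2 powr (- 2 * real L) \<le> (\<integral>x. f x \<partial>MM n L)" .
  then show ?thesis unfolding f_def MM_eq[OF n2] .
qed

end
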